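(* Let $m\geq 2$ be an integer and let $T$ be a tree with at least $m$ vertices. Then, for some $s$, there are subtrees $T_1,\ldots, T_s$ of $T$ which divide $T$ and satisfy $m\leq |T_i|\leq 4m$ for each $i\in [s]$.
   Context: Subtrees $T_1,\dots,T_s$ of $T$ divide $T$ if $E(T_1),\dots,E(T_s)$ form a partition of $E(T)$. $|T_i|$ is the number of vertices of $T_i$. *)

theory Defs
  imports Main
begin

definition graph :: "'a set \<Rightarrow> 'a set set \<Rightarrow> bool" where
  "graph V E \<longleftrightarrow> finite V \<and> (\<forall>e\<in>E. e \<subseteq> V \<and> card e = 2)"

definition adj :: "'a set set \<Rightarrow> 'a \<Rightarrow> 'a \<Rightarrow> bool" where
  "adj E u v \<longleftrightarrow> {u, v} \<in> E"

definition walk :: "'a set \<Rightarrow> 'a set set \<Rightarrow> 'a list \<Rightarrow> bool" where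
  "walk V E p \<longleftrightarrow> p \<noteq> [] \<and> set p \<subseteq> V \<and>
     (\<forall>i. Suc i < length p \<longrightarrow> adj E (p ! i) (p ! Suc i))"

definition connected_graph :: "'a set \<Rightarrow> 'a set set \<Rightarrow> bool" where
  "connected_graph V E \<longleftrightarrow> V \<noteq> {} \<and>
     (\<forall>u\<in>V. \<forall>v\<in>V. \<exists>p. walk V E p \<and> hd p = u \<and> last p = v)"

definition is_cycle :: "'a set \<Rightarrow> 'a set set \<Rightarrow> 'a list \<Rightarrow> bool" where
  "is_cycle V E c \<longleftrightarrow> walk V E c \<and> length c \<ge> 3 \<and> distinct c \<and> adj E (last c) (hd c)"

definition acyclic_graph :: "'a set \<Rightarrow> 'a set set \<Rightarrow> bool" where
  "acyclic_graph V E \<longleftrightarrow> (\<nexists>c. is_cycle V E c)"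

definition tree :: "'a set \<Rightarrow> 'a set set \<Rightarrow> bool" where
  "tree V E \<longleftrightarrow> graph V E \<and> connected_graph V E \<and> acyclic_graph V E"

definition subtree :: "'a set \<times> 'a set set \<Rightarrow> 'a set \<Rightarrow> 'a set set \<Rightarrow> bool" where
  "subtree T V E \<longleftrightarrow> fst T \<subseteq> V \<and> snd T \<subseteq> E \<and> tree (fst T) (snd T)"

definition divides_tree :: "('a set \<times> 'a set set) list \<Rightarrow> 'a set \<Rightarrow> 'a set set \<Rightarrow> bool" where
  "divides_tree Ts V E \<longleftrightarrow>
     (\<forall>i<length Ts. subtree (Ts ! i) V E) \<and>
     (\<forall>i<length Ts. \<forall>j<length Ts. i \<noteq> j \<longrightarrow> snd (Ts ! i) \<inter> snd (Ts ! j) = {}) \<and>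
     (\<Union>i<length Ts. snd (Ts ! i)) = E"

end

theory Submission
  imports Defs
begin

definition reach :: "'a set set \<Rightarrow> 'a \<Rightarrow> 'a \<Rightarrow> bool" where
  "reach E = (\<lambda>a b. {a,b} \<in> E)\<^sup>*\<^sup>*"

definition conn :: "'a set \<Rightarrow> 'a set set \<Rightarrow> bool" where
  "conn V E \<longleftrightarrow> V \<noteq> {} \<and> (\<forall>u\<in>V. \<forall>v\<in>V. reach E u v)"

lemma reach_refl: "reach E a a"
  by (simp add: reach_def)

lemma reach_edge: "{a,b} \<in> E \<Longrightarrow> reach E a b"
  unfolding reach_def by auto

lemma reach_trans: "reach E a b \<Longrightarrow> reach E b c \<Longrightarrow> reach E a c"
  unfolding reach_def by (rule rtranclp_trans)

lemma reach_step: "reach E a b \<Longrightarrow> {b,c} \<in> E \<Longrightarrow> reach E a c"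
  unfolding reach_def by (rule rtranclp.rtrancl_into_rtrancl)

lemma reach_sym: "reach E a b \<Longrightarrow> reach E b a"
  unfolding reach_def
proof (induction rule: rtranclp_induct)
  case base
  then show ?case by simp
next
  case (step y z)
  have "{z,y} \<in> E" using step(2) by (simp add: insert_commute)
  then show ?case using step(3) by (rule converse_rtranclp_into_rtranclp)
qed

lemma reach_mono: "E \<subseteq> F \<Longrightarrow> reach E a b \<Longrightarrow> reach F a b"
  unfolding reach_def
  by (erule rtranclp_mono[THEN predicate2D, rotated]) auto

lemma reach_in: assumes "graph V E" "x \<in> V" "reach E x y" shows "y \<in> V"
  using assms(3,2,1) unfolding reach_def
proof (induction rule: rtranclp_induct)
  case base
  then show ?case by simp
next
  case (step y z)
  then show ?case unfolding graph_def by auto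
qed

lemma walk_snoc:
  assumes "walk V E p" "z \<in> V" "adj E (last p) z"
  shows "walk V E (p @ [z])"
  unfolding walk_def
proof (intro conjI allI impI)
  show "p @ [z] \<noteq> []" by simp
  show "set (p @ [z]) \<subseteq> V" using assms unfolding walk_def by auto
next
  fix i assume i: "Suc i < length (p @ [z])"
  show "adj E ((p @ [z]) ! i) ((p @ [z]) ! Suc i)"
  proof (cases "Suc i < length p")
    case True
    then show ?thesis using assms(1) unfolding walk_def by (simp add: nth_append)
  next
    case False
    then have "i = length p - 1" "p \<noteq> []" using i assms(1) unfolding walk_def by auto
    then show ?thesis using assms(3) False
      by (simp add: nth_append last_conv_nth)
  qed
qed

lemma walk_take:
  assumes "walk V E p" "0 < n"
  shows "walk V E (take n p)"
  using assms unfolding walk_def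
  by (auto dest: in_set_takeD)

lemma reach_path:
  assumes g: "graph V E" and x: "x \<in> V" and r: "reach E x y"
  shows "\<exists>p. walk V E p \<and> hd p = x \<and> last p = y \<and> distinct p"
  using r unfolding reach_def
proof (induction rule: rtranclp_induct)
  case base
  have "walk V E [x]" using x unfolding walk_def by auto
  then show ?case by (intro exI[of _ "[x]"]) auto
next
  case (step y z)
  then obtain p where p: "walk V E p" "hd p = x" "last p = y" "distinct p" by blast
  have zV: "z \<in> V" using reach_in[OF g x, of z] step(1,2) unfolding reach_def
    by (meson rtranclp.rtrancl_into_rtrancl)
  show ?case
  proof (cases "z \<in> set p")
    case False
    have "walk V E (p @ [z])" using walk_snoc[OF p(1) zV] step(2) p(3) by (simp add: adj_def)
    moreover have "p \<noteq> []" using p(1) unfolding walk_def by auto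
    ultimately show ?thesis using p False by (intro exI[of _ "p @ [z]"]) auto
  next
    case True
    then obtain xs ys where sp: "p = xs @ z # ys" by (meson split_list)
    have tk: "take (Suc (length xs)) p = xs @ [z]" using sp by simp
    have w: "walk V E (xs @ [z])" using walk_take[OF p(1), of "Suc (length xs)"] tk by simp
    have "hd (xs @ [z]) = x" using p(2) sp by (cases xs) auto
    moreover have "distinct (xs @ [z])" using p(4) sp by auto
    ultimately show ?thesis using w by (intro exI[of _ "xs @ [z]"]) auto
  qed
qed

lemma walk_reach:
  assumes "walk V E p"
  shows "reach E (hd p) (last p)"
proof -
  have ne: "p \<noteq> []" using assms unfolding walk_def by auto
  have "\<forall>i<length p. reach E (hd p) (p ! i)"
  proof (intro allI impI)
    fix i assume "i < length p"
    then show "reach E (hd p) (p ! i)"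
    proof (induction i)
      case 0
      then show ?case using ne by (simp add: hd_conv_nth reach_refl)
    next
      case (Suc i)
      then have "reach E (hd p) (p ! i)" by simp
      moreover have "adj E (p ! i) (p ! Suc i)" using assms Suc(2) unfolding walk_def by auto
      ultimately show ?case by (simp add: adj_def reach_step)
    qed
  qed
  then show ?thesis using ne by (simp add: last_conv_nth)
qed

lemma conn_connected: "graph V E \<Longrightarrow> conn V E \<Longrightarrow> connected_graph V E"
  unfolding conn_def connected_graph_def
proof (intro conjI ballI)
  fix u v assume "graph V E" "V \<noteq> {} \<and> (\<forall>u\<in>V. \<forall>v\<in>V. reach E u v)" "u \<in> V" "v \<in> V"
  then show "\<exists>p. walk V E p \<and> hd p = u \<and> last p = v" using reach_path[of V E u v] by blast
qed auto

lemma connected_conn: "connected_graph V E \<Longrightarrow> conn V E"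
  unfolding conn_def connected_graph_def
proof (intro conjI ballI)
  fix u v assume "V \<noteq> {} \<and> (\<forall>u\<in>V. \<forall>v\<in>V. \<exists>p. walk V E p \<and> hd p = u \<and> last p = v)" "u \<in> V" "v \<in> V"
  then obtain p where "walk V E p" "hd p = u" "last p = v" by blast
  then show "reach E u v" using walk_reach by metis
qed auto

lemma walk_mono: "walk V E p \<Longrightarrow> V \<subseteq> V' \<Longrightarrow> E \<subseteq> E' \<Longrightarrow> walk V' E' p"
  unfolding walk_def adj_def by auto

lemma acyclic_mono: "acyclic_graph V' E' \<Longrightarrow> V \<subseteq> V' \<Longrightarrow> E \<subseteq> E' \<Longrightarrow> acyclic_graph V E"
  unfolding acyclic_graph_def is_cycle_def adj_def using walk_mono by blast

lemma tree_of: "graph V E \<Longrightarrow> conn V E \<Longrightarrow> acyclic_graph V E \<Longrightarrow> tree V E"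
  unfolding tree_def using conn_connected by blast

lemma conn_glue:
  assumes "conn V1 E1" "conn V2 E2" "w \<in> V1" "w \<in> V2"
  shows "conn (V1 \<union> V2) (E1 \<union> E2)"
proof -
  have a: "reach (E1 \<union> E2) u v" if "u \<in> V1" "v \<in> V1" for u v
    using assms(1) that reach_mono[of E1 "E1 \<union> E2"] unfolding conn_def by blast
  have b: "reach (E1 \<union> E2) u v" if "u \<in> V2" "v \<in> V2" for u v
    using assms(2) that reach_mono[of E2 "E1 \<union> E2"] unfolding conn_def by blast
  show ?thesis unfolding conn_def
  proof (intro conjI ballI)
    show "V1 \<union> V2 \<noteq> {}" using assms by auto
  next
    fix u v assume "u \<in> V1 \<union> V2" "v \<in> V1 \<union> V2"
    then show "reach (E1 \<union> E2) u v"
    proof (elim UnE)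
      assume "u \<in> V1" "v \<in> V1" then show ?thesis by (rule a)
    next
      assume "u \<in> V2" "v \<in> V2" then show ?thesis by (rule b)
    next
      assume "u \<in> V1" "v \<in> V2" then show ?thesis using a[of u w] b[of w v] assms(3,4) reach_trans[of "E1 \<union> E2" u w v] by simp
    next
      assume "u \<in> V2" "v \<in> V1" then show ?thesis using b[of u w] a[of w v] assms(3,4) reach_trans[of "E1 \<union> E2" u w v] by simp
    qed
  qed
qed

lemma conn_edge:
  assumes "conn V1 E1" "conn V2 E2" "x \<in> V1" "y \<in> V2"
  shows "conn (V1 \<union> V2) (E1 \<union> E2 \<union> {{x,y}})"
proof -
  let ?F = "E1 \<union> E2 \<union> {{x,y}}"
  have a: "reach ?F u v" if "u \<in> V1" "v \<in> V1" for u v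
    using assms(1) that reach_mono[of E1 ?F] unfolding conn_def by blast
  have b: "reach ?F u v" if "u \<in> V2" "v \<in> V2" for u v
    using assms(2) that reach_mono[of E2 ?F] unfolding conn_def by blast
  have xy: "reach ?F x y" "reach ?F y x" using reach_edge[of x y ?F] reach_sym by auto
  show ?thesis unfolding conn_def
  proof (intro conjI ballI)
    show "V1 \<union> V2 \<noteq> {}" using assms by auto
  next
    fix u v assume "u \<in> V1 \<union> V2" "v \<in> V1 \<union> V2"
    then show "reach ?F u v"
    proof (elim UnE)
      assume "u \<in> V1" "v \<in> V1" then show ?thesis by (rule a)
    next
      assume "u \<in> V2" "v \<in> V2" then show ?thesis by (rule b)
    next
      assume "u \<in> V1" "v \<in> V2" then show ?thesis using a[of u x] b[of y v] xy assms(3,4) reach_trans[of ?F u x y] reach_trans[of ?F u y v] by simp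
    next
      assume "u \<in> V2" "v \<in> V1" then show ?thesis using b[of u y] a[of x v] xy assms(3,4) reach_trans[of ?F u y x] reach_trans[of ?F u x v] by simp
    qed
  qed
qed

lemma reach_restrict:
  assumes "reach F r x"
  shows "reach {e\<in>F. e \<subseteq> {y. reach F r y}} r x"
  using assms unfolding reach_def
proof (induction rule: rtranclp_induct)
  case base
  then show ?case by simp
next
  case (step y z)
  have "{y,z} \<in> {e\<in>F. e \<subseteq> {y. (\<lambda>a b. {a,b} \<in> F)\<^sup>*\<^sup>* r y}}"
    using step by (auto intro: rtranclp.rtrancl_into_rtrancl)
  then show ?case by (rule rtranclp.rtrancl_into_rtrancl[OF step(3)])
qed

lemma edge2: "graph V E \<Longrightarrow> e \<in> E \<Longrightarrow> \<exists>a b. e = {a,b} \<and> a \<noteq> b \<and> a \<in> V \<and> b \<in> V"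
proof -
  assume "graph V E" "e \<in> E"
  then have "card e = 2" "e \<subseteq> V" unfolding graph_def by auto
  then obtain a b where "e = {a,b}" "a \<noteq> b" by (auto simp: card_2_iff)
  then show ?thesis using \<open>e \<subseteq> V\<close> by auto
qed


lemma edge_split:
  assumes g: "graph V E" and cn: "conn V E" and ac: "acyclic_graph V E"
    and e: "{r,c} \<in> E" and rc: "r \<noteq> c"
  defines "E' \<equiv> E - {{r,c}}"
  defines "Vr \<equiv> {x. reach E' r x}" and "Vc \<equiv> {x. reach E' c x}"
  defines "Er \<equiv> {e\<in>E'. e \<subseteq> Vr}" and "Ec \<equiv> {e\<in>E'. e \<subseteq> Vc}"
  shows "graph Vr Er \<and> conn Vr Er \<and> graph Vc Ec \<and> conn Vc Ec \<and> Vr \<inter> Vc = {} \<and>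
    Vr \<union> Vc = V \<and> Er \<union> Ec \<union> {{r,c}} = E \<and> r \<in> Vr \<and> c \<in> Vc \<and>
    {r,c} \<notin> Er \<and> {r,c} \<notin> Ec \<and> Er \<inter> Ec = {}"
proof -
  have rV: "r \<in> V" and cV: "c \<in> V" using g e unfolding graph_def by auto
  have g': "graph V E'" using g unfolding graph_def E'_def by auto
  have VrV: "Vr \<subseteq> V" using reach_in[OF g' rV] unfolding Vr_def by auto
  have VcV: "Vc \<subseteq> V" using reach_in[OF g' cV] unfolding Vc_def by auto
  have fin: "finite V" using g unfolding graph_def by auto
  have rVr: "r \<in> Vr" and cVc: "c \<in> Vc" unfolding Vr_def Vc_def by (auto simp: reach_refl)
  have un: "Vr \<union> Vc = V"
  proof
    show "Vr \<union> Vc \<subseteq> V" using VrV VcV by auto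
  next
    show "V \<subseteq> Vr \<union> Vc"
    proof
      fix x assume "x \<in> V"
      then have "reach E r x" using cn rV unfolding conn_def by auto
      then show "x \<in> Vr \<union> Vc" unfolding reach_def
      proof (induction rule: rtranclp_induct)
        case base
        then show ?case using rVr by auto
      next
        case (step y z)
        show ?case
        proof (cases "{y,z} = {r,c}")
          case True
          then have "z \<in> {r,c}" by blast
          then have "z = r \<or> z = c" by simp
          then show ?thesis using rVr cVc by auto
        next
          case False
          then have "{y,z} \<in> E'" using step(2) unfolding E'_def by auto
          then show ?thesis using step(3) unfolding Vr_def Vc_def by (auto intro: reach_step)
        qed
      qed
    qed
  qed
  have dis: "Vr \<inter> Vc = {}"
  proof (rule ccontr)
    assume "Vr \<inter> Vc \<noteq> {}"
    then obtain x where x1: "reach E' r x" and x2: "reach E' c x" unfolding Vr_def Vc_def by auto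
    have "reach E' r c" by (rule reach_trans[OF x1 reach_sym[OF x2]])
    then obtain p where p: "walk V E' p" "hd p = r" "last p = c" "distinct p"
      using reach_path[OF g' rV] by blast
    have ne: "p \<noteq> []" using p(1) unfolding walk_def by auto
    have l2: "length p \<ge> 2"
    proof (rule ccontr)
      assume "\<not> length p \<ge> 2"
      then have "length p = 1" using ne by (cases p) (auto simp: Suc_le_eq)
      then have "hd p = last p" by (cases p) auto
      then show False using p rc by simp
    qed
    have l3: "length p \<ge> 3"
    proof (rule ccontr)
      assume "\<not> length p \<ge> 3"
      then have l: "length p = 2" using l2 by simp
      then have "adj E' (p ! 0) (p ! 1)" using p(1) unfolding walk_def by auto
      moreover have "p ! 0 = r" using p(2) ne by (simp add: hd_conv_nth)
      moreover have "p ! 1 = c" using p(3) ne l by (simp add: last_conv_nth)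
      ultimately show False unfolding adj_def E'_def by simp
    qed
    have "is_cycle V E p"
      unfolding is_cycle_def
    proof (intro conjI)
      show "walk V E p" using walk_mono[OF p(1)] unfolding E'_def by auto
      show "adj E (last p) (hd p)" using p(2,3) e by (simp add: adj_def insert_commute)
    qed (use l3 p in auto)
    then show False using ac unfolding acyclic_graph_def by auto
  qed
  have edges: "e' \<in> Er \<or> e' \<in> Ec" if e'E: "e' \<in> E'" for e'
  proof -
    obtain a b where ab: "e' = {a,b}" "a \<in> V" "b \<in> V" using edge2[OF g' e'E] by auto
    have ab': "{a,b} \<in> E'" "{b,a} \<in> E'" using e'E ab by (auto simp: insert_commute)
    have "a \<in> Vr \<or> a \<in> Vc" using un ab by auto
    then show ?thesis
    proof
      assume "a \<in> Vr"
      then have "b \<in> Vr" using ab' unfolding Vr_def by (auto intro: reach_step)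
      then show ?thesis using \<open>a \<in> Vr\<close> ab e'E unfolding Er_def by auto
    next
      assume "a \<in> Vc"
      then have "b \<in> Vc" using ab' unfolding Vc_def by (auto intro: reach_step)
      then show ?thesis using \<open>a \<in> Vc\<close> ab e'E unfolding Ec_def by auto
    qed
  qed
  have eu: "Er \<union> Ec \<union> {{r,c}} = E"
    using edges e unfolding Er_def Ec_def E'_def by blast
  have gr: "graph Vr Er" using g fin VrV unfolding graph_def Er_def E'_def
    by (auto intro: finite_subset)
  have gc: "graph Vc Ec" using g fin VcV unfolding graph_def Ec_def E'_def
    by (auto intro: finite_subset)
  have cr: "conn Vr Er"
    unfolding conn_def
  proof (intro conjI ballI)
    show "Vr \<noteq> {}" using rVr by auto
    fix u v assume "u \<in> Vr" "v \<in> Vr"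
    then have h1: "reach Er r u" and h2: "reach Er r v" using reach_restrict[of E' r] unfolding Vr_def Er_def by auto
    show "reach Er u v" by (rule reach_trans[OF reach_sym[OF h1] h2])
  qed
  have cc: "conn Vc Ec"
    unfolding conn_def
  proof (intro conjI ballI)
    show "Vc \<noteq> {}" using cVc by auto
    fix u v assume "u \<in> Vc" "v \<in> Vc"
    then have h1: "reach Ec c u" and h2: "reach Ec c v" using reach_restrict[of E' c] unfolding Vc_def Ec_def by auto
    show "reach Ec u v" by (rule reach_trans[OF reach_sym[OF h1] h2])
  qed
  have "Er \<inter> Ec = {}"
  proof (rule ccontr)
    assume "Er \<inter> Ec \<noteq> {}"
    then obtain e' where "e' \<in> Er" "e' \<in> Ec" by auto
    then obtain a b where "e' = {a,b}" using edge2[OF g'] unfolding Er_def by blast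
    then show False using \<open>e' \<in> Er\<close> \<open>e' \<in> Ec\<close> dis unfolding Er_def Ec_def by auto
  qed
  then show ?thesis using gr gc cr cc dis un eu rVr cVc unfolding Er_def Ec_def E'_def by auto
qed


lemma branch:
  fixes m :: nat
  assumes m1: "m \<ge> 1"
  shows "graph V E \<Longrightarrow> conn V E \<Longrightarrow> acyclic_graph V E \<Longrightarrow> r \<in> V \<Longrightarrow> m \<le> card V \<Longrightarrow>
    \<exists>VS ES VR ER w. graph VS ES \<and> conn VS ES \<and> graph VR ER \<and> conn VR ER \<and>
      VS \<union> VR = V \<and> VS \<inter> VR = {w} \<and> ES \<union> ER = E \<and> ES \<inter> ER = {} \<and> r \<in> VR \<and>
      m \<le> card VS \<and> card VS < 2 * m"
proof (induction "card V" arbitrary: V E r rule: less_induct)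
  case less
  note g = less.prems(1) and cn = less.prems(2) and ac = less.prems(3) and rV = less.prems(4)
    and mV = less.prems(5)
  have fin: "finite V" using g unfolding graph_def by auto
  show ?case
  proof (cases "card V < 2 * m")
    case True
    have "graph {r} {}" "conn {r} {}" unfolding graph_def conn_def by (auto simp: reach_refl)
    moreover have "V \<union> {r} = V" "V \<inter> {r} = {r}" using rV by auto
    ultimately show ?thesis using True g cn mV
      by (intro exI[of _ V] exI[of _ E] exI[of _ "{r}"] exI[of _ "{}"] exI[of _ r]) simp
  next
    case False
    then have "card V \<ge> 2" using m1 by auto
    have "V - {r} \<noteq> {}"
    proof
      assume "V - {r} = {}"
      then have "V \<subseteq> {r}" by auto
      then have "card V \<le> 1" using card_mono[of "{r}" V] by auto
      then show False using \<open>card V \<ge> 2\<close> by simp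
    qed
    then obtain x where x: "x \<in> V" "x \<noteq> r" by auto
    have "reach E r x" using cn rV x unfolding conn_def by auto
    then have "\<exists>c. {r,c} \<in> E" using x(2) unfolding reach_def
      by (cases rule: converse_rtranclpE) auto
    then obtain c where rcE: "{r,c} \<in> E" by blast
    have rc: "r \<noteq> c"
    proof
      assume "r = c"
      then have "card {r,c} = 1" by simp
      moreover have "card {r,c} = 2" using g rcE unfolding graph_def by blast
      ultimately show False by simp
    qed
    define E' where "E' = E - {{r,c}}"
    define Vr where "Vr = {x. reach E' r x}"
    define Vc where "Vc = {x. reach E' c x}"
    define Er where "Er = {e\<in>E'. e \<subseteq> Vr}"
    define Ec where "Ec = {e\<in>E'. e \<subseteq> Vc}"
    have sp: "graph Vr Er \<and> conn Vr Er \<and> graph Vc Ec \<and> conn Vc Ec \<and> Vr \<inter> Vc = {} \<and>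
      Vr \<union> Vc = V \<and> Er \<union> Ec \<union> {{r,c}} = E \<and> r \<in> Vr \<and> c \<in> Vc \<and>
      {r,c} \<notin> Er \<and> {r,c} \<notin> Ec \<and> Er \<inter> Ec = {}"
      unfolding Er_def Ec_def Vr_def Vc_def E'_def by (rule edge_split[OF g cn ac rcE rc])
    then have grr: "graph Vr Er" and cnr: "conn Vr Er" and grc: "graph Vc Ec" and cnc: "conn Vc Ec"
      and dis: "Vr \<inter> Vc = {}" and un: "Vr \<union> Vc = V" and eu: "Er \<union> Ec \<union> {{r,c}} = E"
      and rVr: "r \<in> Vr" and cVc: "c \<in> Vc" and nr: "{r,c} \<notin> Er" and nc: "{r,c} \<notin> Ec"
      and ed: "Er \<inter> Ec = {}" by auto
    have finr: "finite Vr" and finc: "finite Vc" using un fin by (auto intro: finite_subset)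
    have cardV: "card V = card Vr + card Vc" using card_Un_disjoint[OF finr finc dis] un by simp
    have s1: "Vr \<subseteq> V" "Vc \<subseteq> V" "Er \<subseteq> E" "Ec \<subseteq> E" using un eu by auto
    have acr: "acyclic_graph Vr Er" using acyclic_mono[OF ac s1(1,3)] .
    have acc: "acyclic_graph Vc Ec" using acyclic_mono[OF ac s1(2,4)] .
    have cr1: "card Vr \<ge> 1" and cc1: "card Vc \<ge> 1" using rVr cVc finr finc
      by (auto simp: Suc_le_eq card_gt_0_iff)
    show ?thesis
    proof (cases "card Vc \<ge> m")
      case True
      have "card Vc < card V" using cardV cr1 by simp
      from less.hyps[OF this grc cnc acc cVc True] obtain VS ES VR ER w where
        h: "graph VS ES" "conn VS ES" "graph VR ER" "conn VR ER"
        "VS \<union> VR = Vc" "VS \<inter> VR = {w}" "ES \<union> ER = Ec" "ES \<inter> ER = {}" "c \<in> VR"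
        "m \<le> card VS" "card VS < 2 * m" by blast
      have c2: "conn (Vr \<union> VR) (Er \<union> ER \<union> {{r,c}})" using conn_edge[OF cnr h(4) rVr h(9)] .
      have g2: "graph (Vr \<union> VR) (Er \<union> ER \<union> {{r,c}})"
        using grr h(3) rVr h(9) unfolding graph_def using rc by auto
      have f1: "VS \<union> (Vr \<union> VR) = V" using h(5) un by blast
      have f2: "VS \<inter> (Vr \<union> VR) = {w}" using h(5,6) dis by blast
      have f3: "ES \<union> (Er \<union> ER \<union> {{r,c}}) = E" using h(7) eu by blast
      have f4: "ES \<inter> (Er \<union> ER \<union> {{r,c}}) = {}" using h(7,8) ed nc by blast
      have f5: "r \<in> Vr \<union> VR" using rVr by blast
      show ?thesis
        apply (rule exI[of _ VS], rule exI[of _ ES], rule exI[of _ "Vr \<union> VR"], rule exI[of _ "Er \<union> ER \<union> {{r,c}}"], rule exI[of _ w])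
        using h(1,2,10,11) c2 g2 f1 f2 f3 f4 f5 by (intro conjI)
    next
      case False
      have "card Vr < card V" using cardV cc1 by simp
      moreover have mr: "m \<le> card Vr" using False \<open>\<not> card V < 2 * m\<close> cardV by simp
      ultimately obtain VS ES VR ER w where
        h: "graph VS ES" "conn VS ES" "graph VR ER" "conn VR ER"
        "VS \<union> VR = Vr" "VS \<inter> VR = {w}" "ES \<union> ER = Er" "ES \<inter> ER = {}" "r \<in> VR"
        "m \<le> card VS" "card VS < 2 * m" using less.hyps[OF _ grr cnr acr rVr] by blast
      have c2: "conn (VR \<union> Vc) (ER \<union> Ec \<union> {{r,c}})" using conn_edge[OF h(4) cnc h(9) cVc] .
      have g2: "graph (VR \<union> Vc) (ER \<union> Ec \<union> {{r,c}})"
        using grc h(3) cVc h(9) unfolding graph_def using rc by auto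
      have f1: "VS \<union> (VR \<union> Vc) = V" using h(5) un by blast
      have f2: "VS \<inter> (VR \<union> Vc) = {w}" using h(5,6) dis by blast
      have f3: "ES \<union> (ER \<union> Ec \<union> {{r,c}}) = E" using h(7) eu by blast
      have f4: "ES \<inter> (ER \<union> Ec \<union> {{r,c}}) = {}" using h(7,8) ed nr by blast
      have f5: "r \<in> VR \<union> Vc" using h(9) by blast
      show ?thesis
        apply (rule exI[of _ VS], rule exI[of _ ES], rule exI[of _ "VR \<union> Vc"], rule exI[of _ "ER \<union> Ec \<union> {{r,c}}"], rule exI[of _ w])
        using h(1,2,10,11) c2 g2 f1 f2 f3 f4 f5 by (intro conjI)
    qed
  qed
qed


lemma all_Cons_nth: "(\<forall>i<length (x#xs). P ((x#xs)!i)) \<longleftrightarrow> P x \<and> (\<forall>i<length xs. P (xs!i))"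
  by (auto simp: less_Suc_eq_0_disj)

lemma UN_Cons_nth: "(\<Union>i<length (x#xs). f ((x#xs)!i)) = f x \<union> (\<Union>i<length xs. f (xs!i))"
  by (auto simp: less_Suc_eq_0_disj)

lemma main:
  fixes m :: nat
  assumes m2: "m \<ge> 2"
  shows "graph V E \<Longrightarrow> conn V E \<Longrightarrow> acyclic_graph V E \<Longrightarrow> m \<le> card V \<Longrightarrow>
    \<exists>Ts. (\<forall>i<length Ts. fst (Ts!i) \<subseteq> V \<and> snd (Ts!i) \<subseteq> E \<and> tree (fst (Ts!i)) (snd (Ts!i))) \<and>
      (\<forall>i<length Ts. \<forall>j<length Ts. i \<noteq> j \<longrightarrow> snd (Ts!i) \<inter> snd (Ts!j) = {}) \<and>
      (\<Union>i<length Ts. snd (Ts!i)) = E \<and>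
      (\<forall>i<length Ts. m \<le> card (fst (Ts!i)) \<and> card (fst (Ts!i)) \<le> 4*m)"
proof (induction "card V" arbitrary: V E rule: less_induct)
  case less
  note g = less.prems(1) and cn = less.prems(2) and ac = less.prems(3) and mV = less.prems(4)
  have fin: "finite V" using g unfolding graph_def by auto
  show ?case
  proof (cases "card V \<le> 4 * m")
    case True
    have "tree V E" using tree_of[OF g cn ac] .
    then show ?thesis using True mV
      by (intro exI[of _ "[(V,E)]"]) auto
  next
    case False
    obtain r where rV: "r \<in> V" using cn unfolding conn_def by auto
    obtain VS ES VR ER w where
      h: "graph VS ES" "conn VS ES" "graph VR ER" "conn VR ER"
        "VS \<union> VR = V" "VS \<inter> VR = {w}" "ES \<union> ER = E" "ES \<inter> ER = {}" "r \<in> VR"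
        "m \<le> card VS" "card VS < 2 * m"
      using branch[of m V E r] m2 g cn ac rV mV by auto
    have finS: "finite VS" and finR: "finite VR" using h(5) fin by (auto intro: finite_subset)
    have cs: "card VS + card VR = card V + 1"
      using card_Un_Int[OF finS finR] h(5,6) by simp
    have sub: "VS \<subseteq> V" "ES \<subseteq> E" "VR \<subseteq> V" "ER \<subseteq> E" using h(5,7) by auto
    have acS: "acyclic_graph VS ES" using acyclic_mono[OF ac sub(1,2)] .
    have acR: "acyclic_graph VR ER" using acyclic_mono[OF ac sub(3,4)] .
    have lt: "card VR < card V" using cs h(10) m2 by simp
    have mR: "m \<le> card VR" using cs h(11) False by simp
    obtain Ts where T:
      "\<forall>i<length Ts. fst (Ts!i) \<subseteq> VR \<and> snd (Ts!i) \<subseteq> ER \<and> tree (fst (Ts!i)) (snd (Ts!i))"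
      "\<forall>i<length Ts. \<forall>j<length Ts. i \<noteq> j \<longrightarrow> snd (Ts!i) \<inter> snd (Ts!j) = {}"
      "(\<Union>i<length Ts. snd (Ts!i)) = ER"
      "\<forall>i<length Ts. m \<le> card (fst (Ts!i)) \<and> card (fst (Ts!i)) \<le> 4*m"
      using less.hyps[OF lt h(3,4) acR mR] by blast
    let ?Ts = "(VS, ES) # Ts"
    have tS: "tree VS ES" using tree_of[OF h(1,2) acS] .
    have p1: "\<forall>i<length ?Ts. fst (?Ts!i) \<subseteq> V \<and> snd (?Ts!i) \<subseteq> E \<and> tree (fst (?Ts!i)) (snd (?Ts!i))"
    proof (intro allI impI)
      fix i assume i: "i < length ?Ts"
      show "fst (?Ts!i) \<subseteq> V \<and> snd (?Ts!i) \<subseteq> E \<and> tree (fst (?Ts!i)) (snd (?Ts!i))"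
      proof (cases i)
        case 0
        then show ?thesis using sub tS by simp
      next
        case (Suc j)
        then have "j < length Ts" using i by simp
        then have "fst (Ts!j) \<subseteq> VR \<and> snd (Ts!j) \<subseteq> ER \<and> tree (fst (Ts!j)) (snd (Ts!j))"
          using T(1) by blast
        then show ?thesis using Suc sub by auto
      qed
    qed
    have p2: "\<forall>i<length ?Ts. \<forall>j<length ?Ts. i \<noteq> j \<longrightarrow> snd (?Ts!i) \<inter> snd (?Ts!j) = {}"
    proof (intro allI impI)
      fix i j assume i: "i < length ?Ts" and j: "j < length ?Ts" and ij: "i \<noteq> j"
      show "snd (?Ts!i) \<inter> snd (?Ts!j) = {}"
      proof (cases i)
        case 0
        then obtain j' where "j = Suc j'" "j' < length Ts" using ij j by (cases j) auto
        then show ?thesis using 0 T(1) h(8) by auto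
      next
        case (Suc i')
        show ?thesis
        proof (cases j)
          case 0
          then show ?thesis using Suc i T(1) h(8) by auto
        next
          case (Suc j')
          then show ?thesis using \<open>i = Suc i'\<close> i j ij T(2) by auto
        qed
      qed
    qed
    have p3: "(\<Union>i<length ?Ts. snd (?Ts!i)) = E"
      unfolding UN_Cons_nth using T(3) h(7) by simp
    have p4: "\<forall>i<length ?Ts. m \<le> card (fst (?Ts!i)) \<and> card (fst (?Ts!i)) \<le> 4*m"
      using T(4) h(10,11) by (auto simp: less_Suc_eq_0_disj)
    show ?thesis using p1 p2 p3 p4 by blast
  qed
qed

theorem lemma3p7:
  fixes m :: nat and V :: "'a set" and E :: "'a set set"
  assumes "m \<ge> 2" and "tree V E" and "card V \<ge> m"
  shows "\<exists>Ts. divides_tree Ts V E \<and>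
           (\<forall>i<length Ts. m \<le> card (fst (Ts ! i)) \<and> card (fst (Ts ! i)) \<le> 4 * m)"
proof -
  have g: "graph V E" and cn: "conn V E" and ac: "acyclic_graph V E"
    using assms(2) connected_conn unfolding tree_def by auto
  obtain Ts where T:
      "\<forall>i<length Ts. fst (Ts!i) \<subseteq> V \<and> snd (Ts!i) \<subseteq> E \<and> tree (fst (Ts!i)) (snd (Ts!i))"
      "\<forall>i<length Ts. \<forall>j<length Ts. i \<noteq> j \<longrightarrow> snd (Ts!i) \<inter> snd (Ts!j) = {}"
      "(\<Union>i<length Ts. snd (Ts!i)) = E"
      "\<forall>i<length Ts. m \<le> card (fst (Ts!i)) \<and> card (fst (Ts!i)) \<le> 4*m"
    using main[OF assms(1) g cn ac assms(3)] by blast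
  have "divides_tree Ts V E"
    unfolding divides_tree_def subtree_def using T(1,2,3) by blast
  then show ?thesis using T(4) by blast
qed

end
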